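(* Let $K$ be a field, $1 \le d \le n$, $N \ge n+d$, and let $I = (S_N.\,e_n^d(x_1,\dots,x_n)) \subseteq K[x_1,\dots,x_N]$. If $\mathrm{char}(K) \nmid \binom{n}{d}$, then $$\sqrt{I} = (S_N.\,x_1\cdots x_d).$$ Moreover, if $\mathrm{char}(K) \mid \binom{n}{d}$, then for any $N \ge n$ the ideal $\sqrt{(S_N.\,e_n^d(x_1,\dots,x_n))}\subseteq K[x_1,\dots,x_N]$ contains no monomial.
   Context: $e_n^d(x_1,\dots,x_n)$ denotes the elementary symmetric polynomial of degree $d$ in $x_1,\dots,x_n$. $S_N$ acts on $K[x_1,\dots,x_N]$ by permuting variables; $(S_N.g)$ denotes the ideal generated by the $S_N$-orbit of $g$. *)

theory Defs
  imports "HOL-Library.Poly_Mapping" "HOL-Combinatorics.Permutations"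
begin

text \<open>Multivariate polynomials over 'a in variables x_i (i :: nat):
  a polynomial maps exponent vectors (monomials) to coefficients.\<close>
type_synonym 'a mpoly = "(nat \<Rightarrow>\<^sub>0 nat) \<Rightarrow>\<^sub>0 'a"

definition mconst :: "'a::comm_ring_1 \<Rightarrow> 'a mpoly" where
  "mconst c = Poly_Mapping.single 0 c"

definition mvar :: "nat \<Rightarrow> ('a::comm_ring_1) mpoly" where
  "mvar i = Poly_Mapping.single (Poly_Mapping.single i 1) 1"

definition mmonom :: "(nat \<Rightarrow>\<^sub>0 nat) \<Rightarrow> ('a::comm_ring_1) mpoly" where
  "mmonom \<alpha> = Poly_Mapping.single \<alpha> 1"

definition poly_ring :: "nat \<Rightarrow> ('a::comm_ring_1) mpoly set" where
  "poly_ring N = {p :: 'a mpoly. \<forall>m \<in> Poly_Mapping.keys p. Poly_Mapping.keys (m::nat \<Rightarrow>\<^sub>0 nat) \<subseteq> {1..N}}"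

definition perm_mpoly :: "(nat \<Rightarrow> nat) \<Rightarrow> ('a::comm_ring_1) mpoly \<Rightarrow> 'a mpoly" where
  "perm_mpoly \<sigma> p =
     (\<Sum>m \<in> Poly_Mapping.keys p. mconst (Poly_Mapping.lookup p m) * (\<Prod>i \<in> Poly_Mapping.keys m. mvar (\<sigma> i) ^ Poly_Mapping.lookup m i))"

definition orbit_SN :: "nat \<Rightarrow> ('a::comm_ring_1) mpoly \<Rightarrow> 'a mpoly set" where
  "orbit_SN N g = {perm_mpoly \<sigma> g | \<sigma>. \<sigma> permutes {1..N}}"

definition ideal_gen :: "nat \<Rightarrow> ('a::comm_ring_1) mpoly set \<Rightarrow> 'a mpoly set" where
  "ideal_gen N G = {\<Sum>g \<in> F. c g * g | F c. finite F \<and> F \<subseteq> G \<and> (\<forall>g \<in> F. c g \<in> poly_ring N)}"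

definition radical :: "nat \<Rightarrow> ('a::comm_ring_1) mpoly set \<Rightarrow> 'a mpoly set" where
  "radical N I = {f \<in> poly_ring N. \<exists>k::nat. f ^ k \<in> I}"

definition elem_sym :: "nat \<Rightarrow> nat \<Rightarrow> ('a::comm_ring_1) mpoly" where
  "elem_sym n d = (\<Sum>S \<in> {S. S \<subseteq> {1..n} \<and> card S = d}. \<Prod>i \<in> S. mvar i)"

end

theory Submission
  imports Defs
begin


definition mon :: "(nat \<Rightarrow> 'b::comm_ring_1) \<Rightarrow> (nat \<Rightarrow>\<^sub>0 nat) \<Rightarrow> 'b" where
  "mon f m = (\<Prod>i \<in> Poly_Mapping.keys m. f i ^ Poly_Mapping.lookup m i)"

definition meval :: "(nat \<Rightarrow> 'b::comm_ring_1) \<Rightarrow> ('a::comm_ring_1 \<Rightarrow> 'b) \<Rightarrow> 'a mpoly \<Rightarrow> 'b" where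
  "meval f h p = (\<Sum>m \<in> Poly_Mapping.keys p. h (Poly_Mapping.lookup p m) * mon f m)"

lemma mon_superset:
  assumes "finite K" "Poly_Mapping.keys m \<subseteq> K"
  shows "mon f m = (\<Prod>i \<in> K. f i ^ Poly_Mapping.lookup m i)"
  unfolding mon_def
  by (rule prod.mono_neutral_left) (use assms in \<open>auto simp: in_keys_iff\<close>)

lemma keys_add_nat: "Poly_Mapping.keys (a + b :: 'x \<Rightarrow>\<^sub>0 nat) = Poly_Mapping.keys a \<union> Poly_Mapping.keys b"
  by (auto simp: in_keys_iff lookup_add)

lemma mon_add: "mon f (a + b) = mon f a * mon f b"
proof -
  let ?K = "Poly_Mapping.keys a \<union> Poly_Mapping.keys b"
  have "mon f (a+b) = (\<Prod>i \<in> ?K. f i ^ Poly_Mapping.lookup (a+b) i)"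
    by (rule mon_superset) (auto simp: keys_add_nat)
  also have "\<dots> = (\<Prod>i \<in> ?K. f i ^ Poly_Mapping.lookup a i) * (\<Prod>i \<in> ?K. f i ^ Poly_Mapping.lookup b i)"
    by (simp add: lookup_add power_add prod.distrib)
  also have "\<dots> = mon f a * mon f b"
    by (simp add: mon_superset[symmetric])
  finally show ?thesis .
qed

lemma mon_zero [simp]: "mon f 0 = 1"
  by (simp add: mon_def)

lemma sum_single: "p = (\<Sum>m \<in> Poly_Mapping.keys p. Poly_Mapping.single m (Poly_Mapping.lookup p m))"
  by (rule poly_mapping_eqI) (auto simp: lookup_sum lookup_single when_def in_keys_iff)

locale rhom =
  fixes h :: "'a::comm_ring_1 \<Rightarrow> 'b::comm_ring_1"
  assumes h_add: "h (x + y) = h x + h y"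
    and h_mult: "h (x * y) = h x * h y"
    and h_one: "h 1 = 1"
begin

lemma h_zero [simp]: "h 0 = 0"
  using h_add[of 0 0] by simp

lemma meval_superset:
  assumes "finite K" "Poly_Mapping.keys p \<subseteq> K"
  shows "meval f h p = (\<Sum>m \<in> K. h (Poly_Mapping.lookup p m) * mon f m)"
  unfolding meval_def
  by (rule sum.mono_neutral_left) (use assms in \<open>auto simp: in_keys_iff\<close>)

lemma meval_add: "meval f h (p + q) = meval f h p + meval f h q"
proof -
  let ?K = "Poly_Mapping.keys p \<union> Poly_Mapping.keys q"
  have "meval f h (p+q) = (\<Sum>m \<in> ?K. h (Poly_Mapping.lookup (p+q) m) * mon f m)"
    by (rule meval_superset) (use keys_add[of p q] in auto)
  also have "\<dots> = (\<Sum>m \<in> ?K. h (Poly_Mapping.lookup p m) * mon f m) + (\<Sum>m \<in> ?K. h (Poly_Mapping.lookup q m) * mon f m)"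
    by (simp add: lookup_add h_add distrib_right sum.distrib)
  also have "\<dots> = meval f h p + meval f h q"
    by (simp add: meval_superset[symmetric])
  finally show ?thesis .
qed

lemma meval_uminus: "meval f h (- p) = - meval f h p"
proof -
  have "meval f h p + meval f h (- p) = 0"
    using meval_add[of f p "-p"] by (simp add: meval_def)
  then show ?thesis by (simp add: eq_neg_iff_add_eq_0 add.commute)
qed

lemma meval_zero [simp]: "meval f h 0 = 0"
  by (simp add: meval_def)

lemma meval_sum: "meval f h (\<Sum>x\<in>A. g x) = (\<Sum>x\<in>A. meval f h (g x))"
  by (induction A rule: infinite_finite_induct) (auto simp: meval_add)

lemma meval_single [simp]: "meval f h (Poly_Mapping.single a c) = h c * mon f a"
  by (cases "c = 0") (auto simp: meval_def)


lemma meval_mult: "meval f h (p * q) = meval f h p * meval f h q"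
proof -
  have "p * q = (\<Sum>m \<in> Poly_Mapping.keys p. Poly_Mapping.single m (Poly_Mapping.lookup p m)) *
       (\<Sum>m' \<in> Poly_Mapping.keys q. Poly_Mapping.single m' (Poly_Mapping.lookup q m'))"
    by (simp flip: sum_single)
  also have "\<dots> = (\<Sum>m \<in> Poly_Mapping.keys p. \<Sum>m' \<in> Poly_Mapping.keys q.
      Poly_Mapping.single (m + m') (Poly_Mapping.lookup p m * Poly_Mapping.lookup q m'))"
    by (simp add: sum_product mult_single)
  finally have "meval f h (p*q) = (\<Sum>m \<in> Poly_Mapping.keys p. \<Sum>m' \<in> Poly_Mapping.keys q.
      (h (Poly_Mapping.lookup p m) * mon f m) * (h (Poly_Mapping.lookup q m') * mon f m'))"
    by (simp add: meval_sum h_mult mon_add mult_ac)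
  also have "\<dots> = meval f h p * meval f h q"
    by (simp add: meval_def sum_product)
  finally show ?thesis .
qed

lemma meval_one [simp]: "meval f h 1 = 1"
proof -
  have "(1::'a mpoly) = Poly_Mapping.single 0 1" by simp
  then show ?thesis by (metis meval_single mon_zero h_one mult_1_left)
qed

lemma meval_prod: "meval f h (\<Prod>x\<in>A. g x) = (\<Prod>x\<in>A. meval f h (g x))"
  by (induction A rule: infinite_finite_induct) (auto simp: meval_mult)

lemma meval_power: "meval f h (p ^ k) = meval f h p ^ k"
  by (induction k) (auto simp: meval_mult)

lemma meval_mvar [simp]: "meval f h (mvar i) = f i"
  by (simp add: mvar_def mon_def h_one)

lemma meval_mconst [simp]: "meval f h (mconst c) = h c"
  by (simp add: mconst_def)

end

lemma rhom_id: "rhom id" by unfold_locales auto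

lemma mconst_add: "mconst (a + b) = mconst a + mconst b"
  by (simp add: mconst_def single_add)
lemma mconst_mult: "mconst (a * b) = mconst a * mconst b"
  by (simp add: mconst_def mult_single)
lemma mconst_one [simp]: "mconst 1 = 1"
  by (simp add: mconst_def)
lemma rhom_mconst: "rhom mconst"
  by unfold_locales (auto simp: mconst_add mconst_mult)

lemma perm_mpoly_meval: "perm_mpoly \<sigma> p = meval (\<lambda>i. mvar (\<sigma> i)) mconst p"
  by (simp add: perm_mpoly_def meval_def mon_def)


lemma single_var_pow: "(Poly_Mapping.single (Poly_Mapping.single i (1::nat)) (1::'a::comm_ring_1)) ^ e
   = Poly_Mapping.single (Poly_Mapping.single i e) 1"
proof (induction e)
  case 0 then show ?case by simp
next
  case (Suc e)
  then show ?case by (simp add: mult_single single_add[symmetric])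
qed

lemma prod_single: "(\<Prod>i\<in>K. Poly_Mapping.single (g i) (1::'a::comm_ring_1)) = Poly_Mapping.single (\<Sum>i\<in>K. g i) 1"
  by (induction K rule: infinite_finite_induct) (auto simp: mult_single)

lemma mon_mvar: "mon mvar m = (Poly_Mapping.single m 1 :: 'a::comm_ring_1 mpoly)"
proof -
  have "mon mvar m = (\<Prod>i\<in>Poly_Mapping.keys m. Poly_Mapping.single (Poly_Mapping.single i (Poly_Mapping.lookup m i)) (1::'a))"
    unfolding mon_def mvar_def by (simp only: single_var_pow)
  also have "\<dots> = Poly_Mapping.single m 1"
    by (simp add: prod_single flip: sum_single)
  finally show ?thesis .
qed

lemma meval_id: "meval mvar mconst p = (p :: 'a::comm_ring_1 mpoly)"
proof -
  have "meval mvar mconst p = (\<Sum>m \<in> Poly_Mapping.keys p. mconst (Poly_Mapping.lookup p m) * Poly_Mapping.single m 1)"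
    by (simp add: meval_def mon_mvar)
  also have "\<dots> = (\<Sum>m \<in> Poly_Mapping.keys p. Poly_Mapping.single m (Poly_Mapping.lookup p m))"
    by (simp add: mconst_def mult_single)
  finally show ?thesis by (simp flip: sum_single)
qed

lemma mon_cong: "(\<And>i. i \<in> Poly_Mapping.keys m \<Longrightarrow> f i = g i) \<Longrightarrow> mon f m = mon g m"
  by (simp add: mon_def)

lemma mon_restrict: "mon (\<lambda>i. if i \<in> B then mvar i else 0) m
   = (if Poly_Mapping.keys m \<subseteq> B then Poly_Mapping.single m 1 else (0::'a::comm_ring_1 mpoly))"
proof (cases "Poly_Mapping.keys m \<subseteq> B")
  case True
  then have "mon (\<lambda>i. if i \<in> B then mvar i else 0) m = mon mvar m"
    by (intro mon_cong) auto
  with True show ?thesis by (simp add: mon_mvar)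
next
  case False
  then obtain i where i: "i \<in> Poly_Mapping.keys m" "i \<notin> B" by auto
  then have "Poly_Mapping.lookup m i \<noteq> 0" by (simp add: in_keys_iff)
  then have "(if i \<in> B then mvar i else 0) ^ Poly_Mapping.lookup m i = (0::'a mpoly)"
    using i by (simp add: power_0_left)
  then show ?thesis using False i unfolding mon_def
    by (metis (no_types, lifting) finite_keys prod_zero)
qed

definition restr :: "nat set \<Rightarrow> 'a::comm_ring_1 mpoly \<Rightarrow> 'a mpoly" where
  "restr B = meval (\<lambda>i. if i \<in> B then mvar i else 0) mconst"

lemma restr_eq: "restr B p = (\<Sum>m \<in> {m \<in> Poly_Mapping.keys p. Poly_Mapping.keys m \<subseteq> B}. Poly_Mapping.single m (Poly_Mapping.lookup p m))"
proof -
  have "restr B p = (\<Sum>m \<in> Poly_Mapping.keys p. if Poly_Mapping.keys m \<subseteq> B then Poly_Mapping.single m (Poly_Mapping.lookup p m) else 0)"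
    by (auto simp: restr_def meval_def mon_restrict mconst_def mult_single intro!: sum.cong)
  then show ?thesis by (simp add: sum.inter_filter)
qed

lemma lookup_restr: "Poly_Mapping.lookup (restr B p) m = (if Poly_Mapping.keys m \<subseteq> B then Poly_Mapping.lookup p m else 0)"
proof -
  have "Poly_Mapping.lookup (restr B p) m = (\<Sum>x \<in> {m \<in> Poly_Mapping.keys p. Poly_Mapping.keys m \<subseteq> B}. if x = m then Poly_Mapping.lookup p x else 0)"
    by (simp add: restr_eq lookup_sum lookup_single when_def)
  also have "\<dots> = (if Poly_Mapping.keys m \<subseteq> B then Poly_Mapping.lookup p m else 0)"
    by (simp add: sum.delta) (auto simp: in_keys_iff)
  finally show ?thesis .
qed

lemma keys_restr: "Poly_Mapping.keys (restr B p) \<subseteq> {m. Poly_Mapping.keys m \<subseteq> B}"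
  by (metis (mono_tags, lifting) in_keys_iff lookup_restr mem_Collect_eq subsetI)

lemma restr_id: "p \<in> poly_ring N \<Longrightarrow> restr {1..N} p = p"
  by (rule poly_mapping_eqI) (auto simp: lookup_restr poly_ring_def in_keys_iff)

lemma restr_in: "restr {1..N} p \<in> poly_ring N"
  using keys_restr by (fastforce simp: poly_ring_def)

lemma restr_add: "restr B (p + q) = restr B p + restr B q"
  unfolding restr_def using rhom.meval_add[OF rhom_mconst] by blast
lemma restr_mult: "restr B (p * q) = restr B p * restr B q"
  unfolding restr_def using rhom.meval_mult[OF rhom_mconst] by blast
lemma restr_sum: "restr B (\<Sum>x\<in>A. g x) = (\<Sum>x\<in>A. restr B (g x))"
  unfolding restr_def using rhom.meval_sum[OF rhom_mconst] by blast


lemma poly_ring_iff: "p \<in> poly_ring N \<longleftrightarrow> restr {1..N} p = p"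
  by (metis restr_id restr_in)

lemma poly_ring_add: "p \<in> poly_ring N \<Longrightarrow> q \<in> poly_ring N \<Longrightarrow> p + q \<in> poly_ring N"
  by (simp add: poly_ring_iff restr_add)
lemma poly_ring_mult: "p \<in> poly_ring N \<Longrightarrow> q \<in> poly_ring N \<Longrightarrow> p * q \<in> poly_ring N"
  by (simp add: poly_ring_iff restr_mult)
lemma poly_ring_zero [simp]: "0 \<in> poly_ring N"
  by (simp add: poly_ring_def)
lemma poly_ring_mconst [simp]: "mconst c \<in> poly_ring N"
  by (simp add: poly_ring_def mconst_def)
lemma poly_ring_one [simp]: "1 \<in> poly_ring N"
  by (simp add: poly_ring_def)
lemma poly_ring_mvar: "i \<in> {1..N} \<Longrightarrow> mvar i \<in> poly_ring N"
  by (simp add: poly_ring_def mvar_def)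
lemma poly_ring_sum: "(\<And>x. x \<in> A \<Longrightarrow> g x \<in> poly_ring N) \<Longrightarrow> (\<Sum>x\<in>A. g x) \<in> poly_ring N"
  by (induction A rule: infinite_finite_induct) (auto intro: poly_ring_add)
lemma poly_ring_prod: "(\<And>x. x \<in> A \<Longrightarrow> g x \<in> poly_ring N) \<Longrightarrow> (\<Prod>x\<in>A. g x) \<in> poly_ring N"
  by (induction A rule: infinite_finite_induct) (auto intro: poly_ring_mult)
lemma poly_ring_power: "p \<in> poly_ring N \<Longrightarrow> p ^ k \<in> poly_ring N"
  by (induction k) (auto intro: poly_ring_mult)
lemma poly_ring_uminus: "p \<in> poly_ring N \<Longrightarrow> - p \<in> poly_ring N"
  by (simp add: poly_ring_iff restr_def rhom.meval_uminus[OF rhom_mconst])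
lemma poly_ring_of_nat [simp]: "of_nat k \<in> poly_ring N"
  by (induction k) (auto intro: poly_ring_add)

lemma ig_zero [simp]: "0 \<in> ideal_gen N G"
  unfolding ideal_gen_def by (rule CollectI, rule exI[of _ "{}"]) auto

lemma ig_gen: "g \<in> G \<Longrightarrow> g \<in> ideal_gen N G"
  unfolding ideal_gen_def
  by (rule CollectI, rule exI[of _ "{g}"], rule exI[of _ "\<lambda>_. 1"]) auto

lemma ig_add:
  assumes "a \<in> ideal_gen N G" "b \<in> ideal_gen N G"
  shows "a + b \<in> ideal_gen N G"
proof -
  obtain F1 c1 where 1: "a = (\<Sum>g\<in>F1. c1 g * g)" "finite F1" "F1 \<subseteq> G" "\<forall>g\<in>F1. c1 g \<in> poly_ring N"
    using assms(1) unfolding ideal_gen_def by blast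
  obtain F2 c2 where 2: "b = (\<Sum>g\<in>F2. c2 g * g)" "finite F2" "F2 \<subseteq> G" "\<forall>g\<in>F2. c2 g \<in> poly_ring N"
    using assms(2) unfolding ideal_gen_def by blast
  define c where "c g = (if g \<in> F1 then c1 g else 0) + (if g \<in> F2 then c2 g else 0)" for g
  have "(\<Sum>g\<in>F1\<union>F2. c g * g) = (\<Sum>g\<in>F1\<union>F2. (if g \<in> F1 then c1 g * g else 0)) + (\<Sum>g\<in>F1\<union>F2. (if g \<in> F2 then c2 g * g else 0))"
  proof -
    have "\<And>g. c g * g = (if g \<in> F1 then c1 g * g else 0) + (if g \<in> F2 then c2 g * g else 0)"
      by (simp add: c_def distrib_right)
    then show ?thesis by (simp add: sum.distrib)
  qed
  also have "\<dots> = a + b"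
    using 1 2 by (simp add: sum.If_cases Int_absorb1 Int_absorb2)
  finally have "a + b = (\<Sum>g\<in>F1\<union>F2. c g * g)" by simp
  moreover have "\<forall>g\<in>F1\<union>F2. c g \<in> poly_ring N"
    using 1 2 by (auto simp: c_def intro!: poly_ring_add)
  ultimately show ?thesis unfolding ideal_gen_def using 1 2 by blast
qed

lemma ig_mult:
  assumes "r \<in> poly_ring N" "a \<in> ideal_gen N G"
  shows "r * a \<in> ideal_gen N G"
proof -
  obtain F c where 1: "a = (\<Sum>g\<in>F. c g * g)" "finite F" "F \<subseteq> G" "\<forall>g\<in>F. c g \<in> poly_ring N"
    using assms(2) unfolding ideal_gen_def by blast
  have "r * a = (\<Sum>g\<in>F. (r * c g) * g)" using 1 by (simp add: sum_distrib_left mult_ac)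
  moreover have "\<forall>g\<in>F. r * c g \<in> poly_ring N" using 1 assms(1) by (auto intro: poly_ring_mult)
  ultimately show ?thesis unfolding ideal_gen_def mem_Collect_eq
    by (intro exI[of _ F] exI[of _ "\<lambda>g. r * c g"]) (use 1 in auto)
qed

lemma ig_sum: "(\<And>x. x \<in> A \<Longrightarrow> g x \<in> ideal_gen N G) \<Longrightarrow> (\<Sum>x\<in>A. g x) \<in> ideal_gen N G"
  by (induction A rule: infinite_finite_induct) (auto intro: ig_add)

lemma ig_subset: "G \<subseteq> poly_ring N \<Longrightarrow> ideal_gen N G \<subseteq> poly_ring N"
  unfolding ideal_gen_def by (auto intro!: poly_ring_sum poly_ring_mult)

lemma ig_sub:
  assumes "G \<subseteq> ideal_gen N H"
  shows "ideal_gen N G \<subseteq> ideal_gen N H"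
  unfolding ideal_gen_def[of N G]
  using assms by (auto intro!: ig_sum ig_mult)


definition is_ideal :: "'r::comm_ring_1 set \<Rightarrow> bool" where
  "is_ideal I \<longleftrightarrow> 0 \<in> I \<and> (\<forall>a\<in>I. \<forall>b\<in>I. a + b \<in> I) \<and> (\<forall>a\<in>I. \<forall>r. r * a \<in> I)"

lemma ideal_0: "is_ideal I \<Longrightarrow> 0 \<in> I"
  by (simp add: is_ideal_def)
lemma ideal_add: "is_ideal I \<Longrightarrow> a \<in> I \<Longrightarrow> b \<in> I \<Longrightarrow> a + b \<in> I"
  by (simp add: is_ideal_def)
lemma ideal_multL: "is_ideal I \<Longrightarrow> a \<in> I \<Longrightarrow> r * a \<in> I"
  by (simp add: is_ideal_def)
lemma ideal_multR: "is_ideal I \<Longrightarrow> a \<in> I \<Longrightarrow> a * r \<in> I"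
  by (simp add: is_ideal_def mult.commute)
lemma ideal_uminus: "is_ideal I \<Longrightarrow> a \<in> I \<Longrightarrow> - a \<in> I"
  by (metis ideal_multL mult_minus1)
lemma ideal_diff: "is_ideal I \<Longrightarrow> a \<in> I \<Longrightarrow> b \<in> I \<Longrightarrow> a - b \<in> I"
  by (metis diff_conv_add_uminus ideal_add ideal_uminus)
lemmas idealD = ideal_0 ideal_add ideal_multL ideal_multR ideal_uminus ideal_diff

lemma ideal_sum: "is_ideal I \<Longrightarrow> (\<And>x. x \<in> A \<Longrightarrow> g x \<in> I) \<Longrightarrow> (\<Sum>x\<in>A. g x) \<in> I"
  by (induction A rule: infinite_finite_induct) (auto intro: idealD)

definition is_prime :: "'r::comm_ring_1 set \<Rightarrow> bool" where
  "is_prime P \<longleftrightarrow> is_ideal P \<and> 1 \<notin> P \<and> (\<forall>a b. a * b \<in> P \<longrightarrow> a \<in> P \<or> b \<in> P)"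

lemma prime_prod: assumes P: "is_prime P" and "finite A" "(\<Prod>x\<in>A. g x) \<in> P" shows "\<exists>x\<in>A. g x \<in> P"
  using assms(2,3) proof (induction A rule: finite_induct)
  case empty then show ?case using P by (simp add: is_prime_def)
next
  case (insert x F) then show ?case using P by (auto simp: is_prime_def)
qed

lemma prime_power: "is_prime P \<Longrightarrow> a ^ k \<in> P \<Longrightarrow> a \<in> P"
  using prime_prod[of P "{..<k}" "\<lambda>_. a"] by auto

lemma prod_in_ideal: "is_ideal P \<Longrightarrow> finite A \<Longrightarrow> x \<in> A \<Longrightarrow> g x \<in> P \<Longrightarrow> (\<Prod>x\<in>A. g x) \<in> P"
  by (metis idealD(4) prod.remove)

lemma exists_prime:
  fixes I :: "'r::comm_ring_1 set"
  assumes I: "is_ideal I" and nil: "\<forall>k. x ^ k \<notin> I"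
  shows "\<exists>P. is_prime P \<and> I \<subseteq> P \<and> x \<notin> P"
proof -
  define A where "A = {J. is_ideal J \<and> I \<subseteq> J \<and> (\<forall>k. x ^ k \<notin> J)}"
  have "I \<in> A" using I nil by (simp add: A_def)
  then have "A \<noteq> {}" by auto
  have "\<Union>C \<in> A" if C: "C \<noteq> {}" "subset.chain A C" for C
  proof -
    have CA: "C \<subseteq> A" and ch: "\<And>X Y. X \<in> C \<Longrightarrow> Y \<in> C \<Longrightarrow> X \<subseteq> Y \<or> Y \<subseteq> X"
      using C(2) unfolding subset.chain_def by auto
    obtain J0 where "J0 \<in> C" using C(1) by auto
    have "is_ideal (\<Union>C)"
      unfolding is_ideal_def
    proof (intro conjI ballI allI)
      show "0 \<in> \<Union>C" using \<open>J0 \<in> C\<close> CA by (auto simp: A_def is_ideal_def)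
    next
      fix a b assume "a \<in> \<Union>C" "b \<in> \<Union>C"
      then obtain Ja Jb where "a \<in> Ja" "Ja \<in> C" "b \<in> Jb" "Jb \<in> C" by auto
      then have "Ja \<subseteq> Jb \<or> Jb \<subseteq> Ja" using ch by blast
      then show "a + b \<in> \<Union>C"
      proof
        assume "Ja \<subseteq> Jb"
        moreover have "is_ideal Jb" using \<open>Jb \<in> C\<close> CA by (auto simp: A_def)
        ultimately have "a + b \<in> Jb" using \<open>a \<in> Ja\<close> \<open>b \<in> Jb\<close> by (auto intro: ideal_add)
        then show ?thesis using \<open>Jb \<in> C\<close> by blast
      next
        assume "Jb \<subseteq> Ja"
        moreover have "is_ideal Ja" using \<open>Ja \<in> C\<close> CA by (auto simp: A_def)
        ultimately have "a + b \<in> Ja" using \<open>a \<in> Ja\<close> \<open>b \<in> Jb\<close> by (auto intro: ideal_add)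
        then show ?thesis using \<open>Ja \<in> C\<close> by blast
      qed
    next
      fix a r assume "a \<in> \<Union>C"
      then obtain Ja where "a \<in> Ja" "Ja \<in> C" by auto
      moreover have "is_ideal Ja" using \<open>Ja \<in> C\<close> CA by (auto simp: A_def)
      ultimately have "r * a \<in> Ja" by (auto intro: ideal_multL)
      then show "r * a \<in> \<Union>C" using \<open>Ja \<in> C\<close> by blast
    qed
    moreover have "I \<subseteq> \<Union>C" using \<open>J0 \<in> C\<close> CA by (auto simp: A_def)
    moreover have "\<forall>k. x ^ k \<notin> \<Union>C" using CA by (auto simp: A_def)
    ultimately show ?thesis by (simp add: A_def)
  qed
  then obtain M where M: "M \<in> A" and max: "\<And>X. X \<in> A \<Longrightarrow> M \<subseteq> X \<Longrightarrow> X = M"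
    using subset_Zorn_nonempty[OF \<open>A \<noteq> {}\<close>] by blast
  have Mi: "is_ideal M" and IM: "I \<subseteq> M" and Mx: "\<forall>k. x ^ k \<notin> M" using M by (auto simp: A_def)
  have ext: "\<exists>k m r. m \<in> M \<and> x ^ k = m + r * a" if "a \<notin> M" for a
  proof (rule ccontr)
    assume nex: "\<not> ?thesis"
    define X where "X = {m + r * a | m r. m \<in> M}"
    have "is_ideal X"
      unfolding is_ideal_def X_def
    proof (intro conjI ballI allI)
      show "0 \<in> {m + r * a |m r. m \<in> M}" using Mi by (auto simp: is_ideal_def intro!: exI[of _ 0])
    next
      fix u v assume "u \<in> {m + r * a |m r. m \<in> M}" "v \<in> {m + r * a |m r. m \<in> M}"
      then obtain m1 r1 m2 r2 where "u = m1 + r1 * a" "v = m2 + r2 * a" "m1 \<in> M" "m2 \<in> M" by auto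
      then show "u + v \<in> {m + r * a |m r. m \<in> M}"
      proof -
        have "u + v = (m1 + m2) + (r1 + r2) * a" using \<open>u = _\<close> \<open>v = _\<close> by (simp add: algebra_simps)
        moreover have "m1 + m2 \<in> M" using Mi \<open>m1 \<in> M\<close> \<open>m2 \<in> M\<close> by (rule ideal_add)
        ultimately show ?thesis by blast
      qed
    next
      fix u s assume "u \<in> {m + r * a |m r. m \<in> M}"
      then obtain m1 r1 where "u = m1 + r1 * a" "m1 \<in> M" by auto
      then show "s * u \<in> {m + r * a |m r. m \<in> M}"
      proof -
        have "s * u = (s * m1) + (s * r1) * a" using \<open>u = _\<close> by (simp add: algebra_simps)
        moreover have "s * m1 \<in> M" using Mi \<open>m1 \<in> M\<close> by (rule ideal_multL)
        ultimately show ?thesis by blast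
      qed
    qed
    moreover have "M \<subseteq> X" unfolding X_def by (force intro: exI[of _ 0])
    moreover have "a \<in> X" unfolding X_def using Mi by (force simp: is_ideal_def intro: exI[of _ 0] exI[of _ 1])
    moreover have "\<forall>k. x ^ k \<notin> X" using nex unfolding X_def by auto
    ultimately have "X \<in> A" using IM by (auto simp: A_def)
    with max \<open>M \<subseteq> X\<close> have "X = M" by auto
    with \<open>a \<in> X\<close> \<open>a \<notin> M\<close> show False by simp
  qed
  have "is_prime M"
    unfolding is_prime_def
  proof (intro conjI allI impI)
    show "is_ideal M" by fact
    show "1 \<notin> M" using Mx by (metis power_0)
  next
    fix a b assume ab: "a * b \<in> M"
    show "a \<in> M \<or> b \<in> M"
    proof (rule ccontr)
      assume "\<not> (a \<in> M \<or> b \<in> M)"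
      then obtain i m1 r1 j m2 r2 where 1: "m1 \<in> M" "x ^ i = m1 + r1 * a" and 2: "m2 \<in> M" "x ^ j = m2 + r2 * b"
        using ext by meson
      have "x ^ (i + j) = m1 * (m2 + r2 * b) + r1 * a * m2 + (r1 * r2) * (a * b)"
        by (simp add: power_add 1 2 algebra_simps)
      also have "\<dots> \<in> M"
        by (intro ideal_add[OF Mi] ideal_multL[OF Mi] ideal_multR[OF Mi] 1 2 ab)
      finally show False using Mx by blast
    qed
  qed
  moreover have "x \<notin> M" using Mx by (metis power_one_right)
  ultimately show ?thesis using IM by blast
qed


definition E :: "(nat \<Rightarrow> 'r::comm_ring_1) \<Rightarrow> nat \<Rightarrow> nat set \<Rightarrow> 'r" where
  "E a t T = (\<Sum>S \<in> {S. S \<subseteq> T \<and> card S = t}. \<Prod>i\<in>S. a i)"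

lemma E_0: "finite T \<Longrightarrow> E a 0 T = 1"
proof -
  assume "finite T"
  then have "{S. S \<subseteq> T \<and> card S = 0} = {{}}" by (auto dest: finite_subset)
  then show ?thesis by (simp add: E_def)
qed

lemma E_insert:
  assumes T: "finite T" and x: "x \<notin> T"
  shows "E a (Suc t) (insert x T) = E a (Suc t) T + a x * E a t T"
proof -
  let ?A = "{S. S \<subseteq> T \<and> card S = Suc t}"
  let ?B = "{S. S \<subseteq> T \<and> card S = t}"
  have eq: "{S. S \<subseteq> insert x T \<and> card S = Suc t} = ?A \<union> insert x ` ?B"
  proof (intro set_eqI iffI)
    fix S assume S: "S \<in> {S. S \<subseteq> insert x T \<and> card S = Suc t}"
    then have fS: "finite S" using T by (auto dest: finite_subset)
    show "S \<in> ?A \<union> insert x ` ?B"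
    proof (cases "x \<in> S")
      case True
      then have "S = insert x (S - {x})" by auto
      moreover have "S - {x} \<in> ?B" using S True fS by auto
      ultimately show ?thesis by blast
    next
      case False then show ?thesis using S by auto
    qed
  next
    fix S assume "S \<in> ?A \<union> insert x ` ?B"
    then show "S \<in> {S. S \<subseteq> insert x T \<and> card S = Suc t}"
    proof
      assume "S \<in> ?A" then show ?thesis by auto
    next
      assume "S \<in> insert x ` ?B"
      then obtain S' where "S = insert x S'" "S' \<subseteq> T" "card S' = t" by auto
      moreover have "finite S'" using \<open>S' \<subseteq> T\<close> T by (auto dest: finite_subset)
      moreover have "x \<notin> S'" using \<open>S' \<subseteq> T\<close> x by blast
      ultimately show ?thesis using x by auto
    qed
  qed
  have disj: "?A \<inter> insert x ` ?B = {}" using x by auto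
  have inj: "inj_on (insert x) ?B"
  proof (rule inj_onI)
    fix U V assume "U \<in> ?B" "V \<in> ?B" "insert x U = insert x V"
    then have "x \<notin> U" "x \<notin> V" using x by auto
    then show "U = V" using \<open>insert x U = insert x V\<close>
      by (metis Diff_insert_absorb)
  qed
  have fin: "finite ?A" "finite ?B" using T by auto
  have "E a (Suc t) (insert x T) = (\<Sum>S\<in>?A. \<Prod>i\<in>S. a i) + (\<Sum>S\<in>insert x ` ?B. \<Prod>i\<in>S. a i)"
    unfolding E_def eq using fin disj by (intro sum.union_disjoint) auto
  also have "(\<Sum>S\<in>insert x ` ?B. \<Prod>i\<in>S. a i) = (\<Sum>S\<in>?B. \<Prod>i\<in>insert x S. a i)"
    using inj by (simp add: sum.reindex)
  also have "\<dots> = (\<Sum>S\<in>?B. a x * (\<Prod>i\<in>S. a i))"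
  proof (rule sum.cong)
    fix S assume "S \<in> ?B"
    then have "finite S" "x \<notin> S" using T x by (auto dest: finite_subset)
    then show "(\<Prod>i\<in>insert x S. a i) = a x * (\<Prod>i\<in>S. a i)" by simp
  qed simp
  finally show ?thesis by (simp add: E_def sum_distrib_left)
qed

lemma prod_cong_ideal:
  assumes I: "is_ideal P" and "finite S" and "\<forall>i\<in>S. a i - c \<in> P"
  shows "(\<Prod>i\<in>S. a i) - c ^ card S \<in> P"
  using assms(2,3)
proof (induction S rule: finite_induct)
  case empty then show ?case using I by (simp add: ideal_0)
next
  case (insert x F)
  have "(\<Prod>i\<in>insert x F. a i) - c ^ card (insert x F) = (a x - c) * (\<Prod>i\<in>F. a i) + c * ((\<Prod>i\<in>F. a i) - c ^ card F)"
    using insert by (simp add: algebra_simps)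
  also have "\<dots> \<in> P" using insert I by (intro ideal_add ideal_multL ideal_multR) auto
  finally show ?case .
qed

lemma E_cong:
  assumes I: "is_ideal P" and T: "finite T" and eq: "\<forall>i\<in>T. a i - c \<in> P"
  shows "E a t T - of_nat (card T choose t) * c ^ t \<in> P"
proof -
  have "E a t T - of_nat (card T choose t) * c ^ t = (\<Sum>S \<in> {S. S \<subseteq> T \<and> card S = t}. (\<Prod>i\<in>S. a i) - c ^ card S)"
    using T by (simp add: E_def sum_subtractf n_subsets)
  also have "\<dots> \<in> P"
    using T eq by (intro ideal_sum[OF I] prod_cong_ideal[OF I]) (auto dest: finite_subset)
  finally show ?thesis .
qed

lemma pascal_ideal:
  assumes I: "is_ideal P"
  shows "j \<le> d \<Longrightarrow> d \<le> n \<Longrightarrow> (\<forall>t. j \<le> t \<and> t \<le> d \<longrightarrow> (of_nat ((n - d + j) choose t) :: 'r::comm_ring_1) \<in> P)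
     \<Longrightarrow> (of_nat (n choose d) :: 'r) \<in> P"
proof (induction "d - j" arbitrary: j)
  case 0
  then have "j = d" by simp
  then show ?case using 0 by auto
next
  case (Suc k)
  have "\<forall>t. Suc j \<le> t \<and> t \<le> d \<longrightarrow> (of_nat ((n - d + Suc j) choose t) :: 'r) \<in> P"
  proof (intro allI impI)
    fix t assume t: "Suc j \<le> t \<and> t \<le> d"
    then obtain t' where t': "t = Suc t'" by (cases t) auto
    have "n - d + Suc j = Suc (n - d + j)" using Suc by simp
    then have "(n - d + Suc j) choose t = ((n - d + j) choose t') + ((n - d + j) choose t)"
      using t' by simp
    then show "(of_nat ((n - d + Suc j) choose t) :: 'r) \<in> P"
      using Suc.prems(3) t t' by (auto intro!: ideal_add[OF I])
  qed
  then show ?case using Suc by (intro Suc.hyps(1)[of "Suc j"]) auto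
qed


lemma E_diff:
  assumes "finite T" "u \<notin> T" "v \<notin> T"
  shows "E a (Suc t) (insert u T) - E a (Suc t) (insert v T) = (a u - a v) * E a t T"
  using assms by (simp add: E_insert algebra_simps)

lemma stageL:
  fixes a :: "nat \<Rightarrow> 'r::comm_ring_1"
  assumes P: "is_prime P" and C: "(of_nat (n choose d) :: 'r) \<notin> P" and dn: "d \<le> n"
  shows "1 \<le> j \<Longrightarrow> j \<le> d \<Longrightarrow> finite W \<Longrightarrow> (n - d + j) + j \<le> card W \<Longrightarrow>
     (\<forall>t T. j \<le> t \<longrightarrow> t \<le> d \<longrightarrow> T \<subseteq> W \<longrightarrow> card T = n - d + j \<longrightarrow> E a t T \<in> P) \<Longrightarrow>
     card W \<le> card {i\<in>W. a i \<in> P} + 2 * (j - 1)"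
proof (induction j arbitrary: W)
  case 0 then show ?case by simp
next
  case (Suc j)
  have I: "is_ideal P" using P by (simp add: is_prime_def)
  define m where "m = n - d + Suc j"
  have jd: "Suc j \<le> d" using Suc.prems(2) .
  note IH = Suc.IH
  note pr = Suc.prems
  have H: "\<And>t T. Suc j \<le> t \<Longrightarrow> t \<le> d \<Longrightarrow> T \<subseteq> W \<Longrightarrow> card T = m \<Longrightarrow> E a t T \<in> P"
    using Suc.prems(5) unfolding m_def by blast
  show ?case
  proof (cases "\<forall>u\<in>W. \<forall>v\<in>W. a u - a v \<in> P")
    case True
    have "W \<noteq> {}" using Suc.prems(4) by auto
    then obtain w where w: "w \<in> W" by auto
    show ?thesis
    proof (cases "a w \<in> P")
      case True
      have "\<forall>u\<in>W. a u \<in> P"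
      proof
        fix u assume "u \<in> W"
        then have "a u = (a u - a w) + a w" by simp
        also have "\<dots> \<in> P" using \<open>\<forall>u\<in>W. \<forall>v\<in>W. a u - a v \<in> P\<close> \<open>u \<in> W\<close> w True
          by (intro ideal_add[OF I]) auto
        finally show "a u \<in> P" .
      qed
      then have "{i\<in>W. a i \<in> P} = W" by auto
      then show ?thesis by simp
    next
      case False
      have "\<forall>t. Suc j \<le> t \<and> t \<le> d \<longrightarrow> (of_nat (m choose t) :: 'r) \<in> P"
      proof (intro allI impI)
        fix t assume t: "Suc j \<le> t \<and> t \<le> d"
        obtain T where T: "T \<subseteq> W" "card T = m" "finite T"
          using obtain_subset_with_card_n[of m W] Suc.prems(4) m_def by auto
        have ET: "E a t T \<in> P" using T t by (intro H) auto
        have "E a t T - of_nat (card T choose t) * a w ^ t \<in> P"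
          using True T w by (intro E_cong[OF I]) auto
        then have h1: "E a t T - of_nat (m choose t) * a w ^ t \<in> P" using T(2) by simp
        have "E a t T - (E a t T - of_nat (m choose t) * a w ^ t) \<in> P"
          by (rule ideal_diff[OF I ET h1])
        then have "of_nat (m choose t) * a w ^ t \<in> P" by simp
        then have "of_nat (m choose t) \<in> P \<or> a w ^ t \<in> P" using P by (auto simp: is_prime_def)
        then show "(of_nat (m choose t) :: 'r) \<in> P" using False prime_power[OF P] by blast
      qed
      then have "(of_nat (n choose d) :: 'r) \<in> P"
        using pascal_ideal[OF I, of "Suc j" d n] Suc.prems(2) dn m_def by auto
      with C show ?thesis by simp
    qed
  next
    case False
    then obtain u v where uv: "u \<in> W" "v \<in> W" "a u - a v \<notin> P" by blast
    have "u \<noteq> v" using uv ideal_0[OF I] by auto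
    define W' where "W' = W - {u, v}"
    have fW': "finite W'" using Suc.prems(3) by (simp add: W'_def)
    have cW': "card W' = card W - 2" using uv \<open>u \<noteq> v\<close> Suc.prems(3)
      by (simp add: W'_def card_Diff_subset)
    have sub: "insert u T' \<subseteq> W" "insert v T' \<subseteq> W" if "T' \<subseteq> W'" for T'
      using that uv by (auto simp: W'_def)
    have uvT: "u \<notin> T'" "v \<notin> T'" "finite T'" if "T' \<subseteq> W'" for T'
      using that fW' rev_finite_subset[OF fW' that] by (auto simp: W'_def)
    have cins: "card (insert u T') = Suc (card T')" "card (insert v T') = Suc (card T')" if "T' \<subseteq> W'" for T'
      using uvT[OF that] by simp_all
    show ?thesis
    proof (cases j)
      case 0
      have "m - 1 \<le> card W'" using cW' Suc.prems(4) m_def 0 by simp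
      then obtain T' where T': "T' \<subseteq> W'" "card T' = m - 1"
        using obtain_subset_with_card_n[of "m - 1" W'] by auto
      have m1: "Suc (m - 1) = m" using m_def Suc.prems(2) by simp
      have "E a (Suc 0) (insert u T') \<in> P" "E a (Suc 0) (insert v T') \<in> P"
        using sub[OF T'(1)] cins[OF T'(1)] T'(2) m1 0 jd by (auto intro!: H)
      then have "E a (Suc 0) (insert u T') - E a (Suc 0) (insert v T') \<in> P" by (rule ideal_diff[OF I])
      also have "E a (Suc 0) (insert u T') - E a (Suc 0) (insert v T') = a u - a v"
        using E_diff[of T' u v a 0] uvT[OF T'(1)] E_0[of T' a] by simp
      finally show ?thesis using uv by simp
    next
      case (Suc j0)
      have hyp: "\<forall>t T. j \<le> t \<longrightarrow> t \<le> d \<longrightarrow> T \<subseteq> W' \<longrightarrow> card T = n - d + j \<longrightarrow> E a t T \<in> P"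
      proof (intro allI impI)
        fix t T' assume t: "j \<le> t" "t \<le> d" and T': "T' \<subseteq> W'" "card T' = n - d + j"
        have low: "E a t' T' \<in> P" if t': "j \<le> t'" "t' < d" for t'
        proof -
          have "E a (Suc t') (insert u T') \<in> P" "E a (Suc t') (insert v T') \<in> P"
            using sub[OF T'(1)] cins[OF T'(1)] T'(2) t' Suc m_def by (auto intro!: H)
          then have "(a u - a v) * E a t' T' \<in> P"
            using E_diff[of T' u v a t'] uvT[OF T'(1)] ideal_diff[OF I] by metis
          then show ?thesis using uv P by (auto simp: is_prime_def)
        qed
        show "E a t T' \<in> P"
        proof (cases "t < d")
          case True then show ?thesis using low t by auto
        next
          case False
          then have td: "t = d" using t by simp
          then obtain d' where d': "d = Suc d'" using \<open>Suc j \<le> d\<close> by (cases d) auto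
          have "E a (Suc d') (insert u T') \<in> P"
            using sub[OF T'(1)] cins[OF T'(1)] T'(2) d' jd Suc m_def by (auto intro!: H)
          moreover have "E a d' T' \<in> P" using low[of d'] d' \<open>Suc j \<le> d\<close> by auto
          ultimately have "E a (Suc d') (insert u T') - a u * E a d' T' \<in> P"
            by (intro ideal_diff[OF I] ideal_multL[OF I])
          also have "E a (Suc d') (insert u T') - a u * E a d' T' = E a (Suc d') T'"
            using E_insert[of T' u a d'] uvT[OF T'(1)] by simp
          finally show ?thesis using td d' by simp
        qed
      qed
      have "card W' \<le> card {i\<in>W'. a i \<in> P} + 2 * (j - 1)"
        using Suc fW' cW' pr(4) jd by (intro IH hyp) auto
      moreover have "card {i\<in>W'. a i \<in> P} \<le> card {i\<in>W. a i \<in> P}"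
        using Suc.prems(3) by (intro card_mono) (auto simp: W'_def)
      moreover have "card W = card W' + 2" using cW' Suc.prems(4) by simp
      ultimately show ?thesis using Suc by simp
    qed
  qed
qed


lemma point_main:
  fixes a :: "nat \<Rightarrow> 'r::comm_ring_1"
  assumes P: "is_prime P" and C: "(of_nat (n choose d) :: 'r) \<notin> P"
    and d1: "1 \<le> d" and dn: "d \<le> n" and nN: "n + d \<le> N"
    and hyp: "\<forall>T. T \<subseteq> {1..N} \<longrightarrow> card T = n \<longrightarrow> E a d T \<in> P"
    and D: "D \<subseteq> {1..N}" "card D = d"
  shows "\<exists>i\<in>D. a i \<in> P"
proof (rule ccontr)
  assume nz: "\<not> (\<exists>i\<in>D. a i \<in> P)"
  have I: "is_ideal P" using P by (simp add: is_prime_def)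
  define Z where "Z = {i\<in>{1..N}. a i \<in> P}"
  have h: "\<forall>t T. d \<le> t \<longrightarrow> t \<le> d \<longrightarrow> T \<subseteq> {1..N} \<longrightarrow> card T = n - d + d \<longrightarrow> E a t T \<in> P"
    using hyp dn by auto
  have "card {1..N} \<le> card Z + 2 * (d - 1)"
    unfolding Z_def
    by (rule stageL[OF P C dn _ _ _ _ h]) (use d1 nN dn in auto)
  then have cZ: "n - d \<le> card Z" using nN d1 by simp
  then obtain Z0 where Z0: "Z0 \<subseteq> Z" "card Z0 = n - d" "finite Z0"
    using obtain_subset_with_card_n[OF cZ] by blast
  have fD: "finite D" by (rule finite_subset[OF D(1)]) simp
  have disj: "D \<inter> Z0 = {}" using nz Z0(1) by (auto simp: Z_def)
  define T where "T = D \<union> Z0"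
  have T: "T \<subseteq> {1..N}" "card T = n"
    using D Z0 disj fD dn by (auto simp: T_def Z_def card_Un_disjoint)
  have fT: "finite T" by (rule finite_subset[OF T(1)]) simp
  have ET: "E a d T \<in> P" using hyp T by auto
  let ?S = "{S. S \<subseteq> T \<and> card S = d}"
  have DS: "D \<in> ?S" unfolding T_def using D(2) by blast
  have "?S \<subseteq> Pow T" by blast
  then have finS: "finite ?S" using fT by (meson finite_Pow_iff finite_subset)
  have Esplit: "E a d T = (\<Prod>i\<in>D. a i) + (\<Sum>S\<in>?S - {D}. \<Prod>i\<in>S. a i)"
    unfolding E_def by (rule sum.remove[OF finS DS])
  have Rest: "(\<Sum>S\<in>?S - {D}. \<Prod>i\<in>S. a i) \<in> P"
  proof (rule ideal_sum[OF I])
    fix S assume S: "S \<in> ?S - {D}"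
    have S1: "S \<subseteq> T" "card S = d" "S \<noteq> D" using S by auto
    have "\<not> S \<subseteq> D"
    proof
      assume "S \<subseteq> D"
      then have "S = D" by (rule card_subset_eq[OF fD]) (simp add: S1(2) D(2))
      then show False using S1(3) by contradiction
    qed
    then obtain i where i: "i \<in> S" "i \<notin> D" by blast
    then have "i \<in> Z0" using S1(1) unfolding T_def by blast
    then have "a i \<in> P" using Z0(1) unfolding Z_def by blast
    moreover have "finite S" using fT S1(1) by (rule rev_finite_subset)
    ultimately show "(\<Prod>i\<in>S. a i) \<in> P" using prod_in_ideal[OF I _ i(1), of a] by blast
  qed
  have "E a d T - (\<Sum>S\<in>?S - {D}. \<Prod>i\<in>S. a i) \<in> P"
    by (rule ideal_diff[OF I ET Rest])
  then have "(\<Prod>i\<in>D. a i) \<in> P"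
    unfolding Esplit by simp
  then obtain i where "i \<in> D" "a i \<in> P" using prime_prod[OF P fD, of a] by blast
  then show False using nz by blast
qed


lemma exists_perm_image:
  assumes U: "finite U" and A: "A \<subseteq> U" and B: "B \<subseteq> U" and c: "card A = card B"
  shows "\<exists>\<sigma>. \<sigma> permutes U \<and> \<sigma> ` A = B"
proof -
  have fA: "finite A" "finite B" using U A B by (auto dest: finite_subset)
  obtain h1 where h1: "bij_betw h1 A B" using finite_same_card_bij[OF fA c] by blast
  have "card (U - A) = card (U - B)" using U A B c fA by (simp add: card_Diff_subset)
  then obtain h2 where h2: "bij_betw h2 (U - A) (U - B)"
    using finite_same_card_bij[of "U - A" "U - B"] U by blast
  define \<sigma> where "\<sigma> x = (if x \<in> A then h1 x else if x \<in> U then h2 x else x)" for x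
  have b1: "bij_betw \<sigma> A B" using h1 by (rule bij_betw_cong[THEN iffD1, rotated]) (simp add: \<sigma>_def)
  have b2: "bij_betw \<sigma> (U - A) (U - B)" using h2 by (rule bij_betw_cong[THEN iffD1, rotated]) (simp add: \<sigma>_def)
  have "bij_betw \<sigma> (A \<union> (U - A)) (B \<union> (U - B))" using bij_betw_combine[OF b1 b2] by auto
  then have "bij_betw \<sigma> U U" using A B by (simp add: Un_absorb1 Un_Diff_cancel)
  then have "\<sigma> permutes U" by (rule bij_imp_permutes) (auto simp: \<sigma>_def A[THEN subsetD])
  moreover have "\<sigma> ` A = B" using b1 by (simp add: bij_betw_def)
  ultimately show ?thesis by blast
qed

lemma subsets_image:
  assumes "inj \<sigma>"
  shows "{S'. S' \<subseteq> \<sigma> ` A \<and> card S' = d} = (image \<sigma>) ` {S. S \<subseteq> A \<and> card S = d}"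
proof (intro set_eqI iffI)
  fix S' assume "S' \<in> {S'. S' \<subseteq> \<sigma> ` A \<and> card S' = d}"
  then obtain S where "S \<subseteq> A" "S' = \<sigma> ` S" "card S' = d" by (auto simp: subset_image_iff)
  moreover have "card S = d" using calculation assms by (simp add: card_image inj_on_subset)
  ultimately show "S' \<in> (image \<sigma>) ` {S. S \<subseteq> A \<and> card S = d}" by blast
next
  fix S' assume "S' \<in> (image \<sigma>) ` {S. S \<subseteq> A \<and> card S = d}"
  then obtain S where "S \<subseteq> A" "S' = \<sigma> ` S" "card S = d" by auto
  then show "S' \<in> {S'. S' \<subseteq> \<sigma> ` A \<and> card S' = d}" using assms
    by (auto simp: card_image inj_on_subset)
qed

lemma elem_sym_E: "elem_sym n d = E mvar d {1..n}"
  by (simp add: elem_sym_def E_def)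

lemma perm_E:
  assumes "inj \<sigma>"
  shows "perm_mpoly \<sigma> (E mvar d A :: 'a::comm_ring_1 mpoly) = E mvar d (\<sigma> ` A)"
proof -
  have "perm_mpoly \<sigma> (E mvar d A :: 'a mpoly) = (\<Sum>S\<in>{S. S \<subseteq> A \<and> card S = d}. \<Prod>i\<in>S. mvar (\<sigma> i))"
    by (simp add: perm_mpoly_meval E_def rhom.meval_sum[OF rhom_mconst] rhom.meval_prod[OF rhom_mconst]
        rhom.meval_mvar[OF rhom_mconst])
  also have "\<dots> = (\<Sum>S\<in>{S. S \<subseteq> A \<and> card S = d}. \<Prod>i\<in>\<sigma> ` S. mvar i)"
    using assms by (intro sum.cong refl) (simp add: prod.reindex inj_on_subset)
  also have "\<dots> = (\<Sum>S'\<in>(image \<sigma>) ` {S. S \<subseteq> A \<and> card S = d}. \<Prod>i\<in>S'. mvar i)"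
    using assms by (subst sum.reindex) (auto simp: inj_on_def inj_image_eq_iff)
  also have "\<dots> = E mvar d (\<sigma> ` A)"
    by (simp add: E_def subsets_image[OF assms])
  finally show ?thesis .
qed

lemma perm_prodvar:
  assumes "inj \<sigma>"
  shows "perm_mpoly \<sigma> (\<Prod>i\<in>A. mvar i :: 'a::comm_ring_1 mpoly) = (\<Prod>i\<in>\<sigma> ` A. mvar i)"
proof -
  have "perm_mpoly \<sigma> (\<Prod>i\<in>A. mvar i :: 'a mpoly) = (\<Prod>i\<in>A. mvar (\<sigma> i))"
    by (simp add: perm_mpoly_meval rhom.meval_prod[OF rhom_mconst] rhom.meval_mvar[OF rhom_mconst])
  also have "\<dots> = (\<Prod>i\<in>\<sigma> ` A. mvar i)"
    using assms by (simp add: prod.reindex inj_on_subset)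
  finally show ?thesis .
qed

lemma orbit_elem:
  assumes "n \<le> N"
  shows "orbit_SN N (elem_sym n d :: 'a::comm_ring_1 mpoly) = {E mvar d T | T. T \<subseteq> {1..N} \<and> card T = n}"
proof (intro set_eqI iffI)
  fix g assume "g \<in> orbit_SN N (elem_sym n d :: 'a mpoly)"
  then obtain \<sigma> where s: "\<sigma> permutes {1..N}" "g = perm_mpoly \<sigma> (elem_sym n d)"
    by (auto simp: orbit_SN_def)
  have inj: "inj \<sigma>" using s(1) by (rule permutes_inj)
  have "g = E mvar d (\<sigma> ` {1..n})" using s inj by (simp add: elem_sym_E perm_E)
  moreover have "\<sigma> ` {1..n} \<subseteq> {1..N}"
    using permutes_image[OF s(1)] assms by auto
  moreover have "card (\<sigma> ` {1..n}) = n" using inj by (simp add: card_image inj_on_subset)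
  ultimately show "g \<in> {E mvar d T | T. T \<subseteq> {1..N} \<and> card T = n}" by blast
next
  fix g :: "'a mpoly" assume "g \<in> {E mvar d T | T. T \<subseteq> {1..N} \<and> card T = n}"
  then obtain T where T: "T \<subseteq> {1..N}" "card T = n" "g = E mvar d T" by auto
  obtain \<sigma> where s: "\<sigma> permutes {1..N}" "\<sigma> ` {1..n} = T"
    using exists_perm_image[of "{1..N}" "{1..n}" T] T assms by auto
  have "perm_mpoly \<sigma> (elem_sym n d) = g"
    using s T permutes_inj[OF s(1)] by (simp add: elem_sym_E perm_E)
  then show "g \<in> orbit_SN N (elem_sym n d :: 'a mpoly)" using s by (auto simp: orbit_SN_def)
qed

lemma orbit_prodvar:
  assumes "d \<le> N"
  shows "orbit_SN N (\<Prod>i\<in>{1..d}. mvar i :: 'a::comm_ring_1 mpoly) = {\<Prod>i\<in>B. mvar i | B. B \<subseteq> {1..N} \<and> card B = d}"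
proof (intro set_eqI iffI)
  fix g assume "g \<in> orbit_SN N (\<Prod>i\<in>{1..d}. mvar i :: 'a mpoly)"
  then obtain \<sigma> where s: "\<sigma> permutes {1..N}" "g = perm_mpoly \<sigma> (\<Prod>i\<in>{1..d}. mvar i)"
    by (auto simp: orbit_SN_def)
  have inj: "inj \<sigma>" using s(1) by (rule permutes_inj)
  have "g = (\<Prod>i\<in>\<sigma> ` {1..d}. mvar i)" using s inj by (simp add: perm_prodvar)
  moreover have "\<sigma> ` {1..d} \<subseteq> {1..N}"
    using permutes_image[OF s(1)] assms by auto
  moreover have "card (\<sigma> ` {1..d}) = d" using inj by (simp add: card_image inj_on_subset)
  ultimately show "g \<in> {\<Prod>i\<in>B. mvar i | B. B \<subseteq> {1..N} \<and> card B = d}" by blast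
next
  fix g :: "'a mpoly" assume "g \<in> {\<Prod>i\<in>B. mvar i | B. B \<subseteq> {1..N} \<and> card B = d}"
  then obtain B where T: "B \<subseteq> {1..N}" "card B = d" "g = (\<Prod>i\<in>B. mvar i)" by auto
  obtain \<sigma> where s: "\<sigma> permutes {1..N}" "\<sigma> ` {1..d} = B"
    using exists_perm_image[of "{1..N}" "{1..d}" B] T assms by auto
  have "perm_mpoly \<sigma> (\<Prod>i\<in>{1..d}. mvar i) = g"
    using s T permutes_inj[OF s(1)] by (simp add: perm_prodvar)
  then show "g \<in> orbit_SN N (\<Prod>i\<in>{1..d}. mvar i :: 'a mpoly)" using s by (auto simp: orbit_SN_def)
qed


lemma rad_poly: "a \<in> radical N I \<Longrightarrow> a \<in> poly_ring N"
  by (simp add: radical_def)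

lemma rad_add:
  assumes a: "a \<in> radical N (ideal_gen N G)" and b: "b \<in> radical N (ideal_gen N G)"
  shows "a + b \<in> radical N (ideal_gen N G)"
proof -
  obtain k1 where k1: "a ^ k1 \<in> ideal_gen N G" using a by (auto simp: radical_def)
  obtain k2 where k2: "b ^ k2 \<in> ideal_gen N G" using b by (auto simp: radical_def)
  have pa: "a \<in> poly_ring N" and pb: "b \<in> poly_ring N" using a b by (auto simp: radical_def)
  have "(a + b) ^ (k1 + k2) = (\<Sum>i\<le>k1+k2. of_nat ((k1+k2) choose i) * a ^ i * b ^ (k1 + k2 - i))"
    by (rule binomial_ring)
  also have "\<dots> \<in> ideal_gen N G"
  proof (rule ig_sum)
    fix i assume "i \<in> {..k1+k2}"
    show "of_nat ((k1+k2) choose i) * a ^ i * b ^ (k1 + k2 - i) \<in> ideal_gen N G"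
    proof (cases "k1 \<le> i")
      case True
      then have "a ^ i = a ^ (i - k1) * a ^ k1" by (simp flip: power_add)
      then have "of_nat ((k1+k2) choose i) * a ^ i * b ^ (k1 + k2 - i) =
         (of_nat ((k1+k2) choose i) * a ^ (i - k1) * b ^ (k1 + k2 - i)) * a ^ k1"
        by (simp add: mult_ac)
      also have "\<dots> \<in> ideal_gen N G"
        using pa pb k1 by (intro ig_mult poly_ring_mult poly_ring_power poly_ring_of_nat)
      finally show ?thesis .
    next
      case False
      then have "b ^ (k1 + k2 - i) = b ^ (k1 + k2 - i - k2) * b ^ k2" by (simp flip: power_add)
      then have "of_nat ((k1+k2) choose i) * a ^ i * b ^ (k1 + k2 - i) =
         (of_nat ((k1+k2) choose i) * a ^ i * b ^ (k1 + k2 - i - k2)) * b ^ k2"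
        by (simp add: mult_ac)
      also have "\<dots> \<in> ideal_gen N G"
        using pa pb k2 by (intro ig_mult poly_ring_mult poly_ring_power poly_ring_of_nat)
      finally show ?thesis .
    qed
  qed
  finally show ?thesis using pa pb by (auto simp: radical_def intro: poly_ring_add)
qed

lemma rad_mult:
  assumes r: "r \<in> poly_ring N" and a: "a \<in> radical N (ideal_gen N G)"
  shows "r * a \<in> radical N (ideal_gen N G)"
proof -
  obtain k where k: "a ^ k \<in> ideal_gen N G" "a \<in> poly_ring N" using a by (auto simp: radical_def)
  have "(r * a) ^ k = r ^ k * a ^ k" by (simp add: power_mult_distrib)
  also have "\<dots> \<in> ideal_gen N G" using r k by (intro ig_mult poly_ring_power)
  finally show ?thesis using r k by (auto simp: radical_def intro: poly_ring_mult)
qed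

lemma rad_zero: "0 \<in> radical N (ideal_gen N G)"
  unfolding radical_def by (auto intro!: exI[of _ 1])

lemma rad_sum: "(\<And>x. x \<in> A \<Longrightarrow> g x \<in> radical N (ideal_gen N G)) \<Longrightarrow> (\<Sum>x\<in>A. g x) \<in> radical N (ideal_gen N G)"
  by (induction A rule: infinite_finite_induct) (auto intro: rad_add rad_zero)

section \<open>The squarefree monomial ideal is radical\<close>

lemma E_poly: "T \<subseteq> {1..N} \<Longrightarrow> E mvar d T \<in> poly_ring N"
  unfolding E_def by (intro poly_ring_sum poly_ring_prod poly_ring_mvar) auto

lemma prodvar_poly: "B \<subseteq> {1..N} \<Longrightarrow> (\<Prod>i\<in>B. mvar i) \<in> poly_ring N"
  by (intro poly_ring_prod poly_ring_mvar) auto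

lemma mono_in_J:
  fixes c :: "'a::comm_ring_1"
  assumes dN: "d \<le> N" and m: "Poly_Mapping.keys m \<subseteq> {1..N}" and dm: "d \<le> card (Poly_Mapping.keys m)"
  shows "Poly_Mapping.single m c \<in> ideal_gen N (orbit_SN N (\<Prod>i\<in>{1..d}. mvar i :: 'a mpoly))"
proof -
  obtain B where B: "B \<subseteq> Poly_Mapping.keys m" "card B = d" "finite B"
    using obtain_subset_with_card_n[OF dm] by blast
  define ind where "ind = (\<Sum>i\<in>B. Poly_Mapping.single i (1::nat))"
  have lind: "Poly_Mapping.lookup ind i = (if i \<in> B then 1 else 0)" for i
    by (simp add: ind_def lookup_sum lookup_single when_def B(3))
  have meq: "m = (m - ind) + ind"
  proof (rule poly_mapping_eqI)
    fix i
    show "Poly_Mapping.lookup m i = Poly_Mapping.lookup (m - ind + ind) i"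
    proof (cases "i \<in> B")
      case True
      then have "Poly_Mapping.lookup m i \<noteq> 0" using B(1) by (auto simp: in_keys_iff)
      then show ?thesis using True by (simp add: lookup_add lookup_minus lind)
    next
      case False then show ?thesis by (simp add: lookup_add lookup_minus lind)
    qed
  qed
  have "Poly_Mapping.single m c = Poly_Mapping.single (m - ind) c * Poly_Mapping.single ind (1::'a)"
    by (subst meq) (simp add: mult_single)
  also have "Poly_Mapping.single ind (1::'a) = (\<Prod>i\<in>B. mvar i)"
    by (simp add: mvar_def prod_single ind_def)
  finally have eq: "Poly_Mapping.single m c = Poly_Mapping.single (m - ind) c * (\<Prod>i\<in>B. mvar i)" .
  have "Poly_Mapping.keys (m - ind) \<subseteq> Poly_Mapping.keys m"
    by (auto simp: in_keys_iff lookup_minus)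
  then have "Poly_Mapping.single (m - ind) c \<in> poly_ring N"
    using m by (auto simp: poly_ring_def)
  moreover have "(\<Prod>i\<in>B. mvar i) \<in> orbit_SN N (\<Prod>i\<in>{1..d}. mvar i :: 'a mpoly)"
  proof -
    have "B \<subseteq> {1..N}" using B(1) m by (rule order.trans)
    then have "(\<Prod>i\<in>B. mvar i) \<in> {\<Prod>i\<in>B. mvar i | B. B \<subseteq> {1..N} \<and> card B = d}"
      using B(2) by blast
    then show ?thesis by (simp only: orbit_prodvar[OF dN])
  qed
  ultimately show ?thesis unfolding eq by (intro ig_mult ig_gen)
qed

lemma restr_kills_J:
  assumes dN: "d \<le> N" and B: "finite B" "card B < d"
    and x: "x \<in> ideal_gen N (orbit_SN N (\<Prod>i\<in>{1..d}. mvar i :: 'a::comm_ring_1 mpoly))"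
  shows "restr B x = 0"
proof -
  obtain F c where F: "x = (\<Sum>g\<in>F. c g * g)" "F \<subseteq> orbit_SN N (\<Prod>i\<in>{1..d}. mvar i :: 'a mpoly)"
    using x unfolding ideal_gen_def by blast
  have "restr B g = 0" if g: "g \<in> F" for g
  proof -
    have "g \<in> orbit_SN N (\<Prod>i\<in>{1..d}. mvar i :: 'a mpoly)" using F(2) g by (rule subsetD)
    then have "g \<in> {\<Prod>i\<in>B. mvar i | B. B \<subseteq> {1..N} \<and> card B = d}"
      by (simp only: orbit_prodvar[OF dN])
    then obtain B' where B': "B' \<subseteq> {1..N}" "card B' = d" "g = (\<Prod>i\<in>B'. mvar i)"
      by blast
    have fB': "finite B'" using B'(1) by (rule finite_subset) simp
    have "\<not> B' \<subseteq> B"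
    proof
      assume "B' \<subseteq> B"
      then have "card B' \<le> card B" by (rule card_mono[OF B(1)])
      then show False using B(2) B'(2) by simp
    qed
    then obtain i where i: "i \<in> B'" "i \<notin> B" by blast
    have "restr B g = (\<Prod>j\<in>B'. (if j \<in> B then mvar j else 0))"
      unfolding B'(3) restr_def by (simp add: rhom.meval_prod[OF rhom_mconst] rhom.meval_mvar[OF rhom_mconst])
    also have "\<dots> = 0" using fB' i by (intro prod_zero) auto
    finally show ?thesis .
  qed
  then show ?thesis unfolding F(1) by (simp add: restr_sum restr_mult)
qed

lemma J_rad:
  fixes f :: "'a::field mpoly"
  assumes dN: "d \<le> N" and f: "f \<in> poly_ring N"
    and fk: "f ^ k \<in> ideal_gen N (orbit_SN N (\<Prod>i\<in>{1..d}. mvar i :: 'a mpoly))"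
  shows "f \<in> ideal_gen N (orbit_SN N (\<Prod>i\<in>{1..d}. mvar i :: 'a mpoly))"
proof -
  have big: "d \<le> card (Poly_Mapping.keys m)" if m: "m \<in> Poly_Mapping.keys f" for m
  proof (rule ccontr)
    assume "\<not> d \<le> card (Poly_Mapping.keys m)"
    then have lt: "card (Poly_Mapping.keys m) < d" by simp
    let ?B = "Poly_Mapping.keys m"
    have "restr ?B (f ^ k) = 0" using restr_kills_J[OF dN _ lt fk] by simp
    then have "(restr ?B f) ^ k = 0" unfolding restr_def by (simp add: rhom.meval_power[OF rhom_mconst])
    then have "restr ?B f = 0" by simp
    then have "Poly_Mapping.lookup (restr ?B f) m = 0" by simp
    then show False using m by (simp add: lookup_restr in_keys_iff)
  qed
  have "f = (\<Sum>m \<in> Poly_Mapping.keys f. Poly_Mapping.single m (Poly_Mapping.lookup f m))"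
    by (rule sum_single)
  also have "\<dots> \<in> ideal_gen N (orbit_SN N (\<Prod>i\<in>{1..d}. mvar i :: 'a mpoly))"
    using f big by (intro ig_sum mono_in_J[OF dN]) (auto simp: poly_ring_def)
  finally show ?thesis .
qed


lemma orbit_elem_poly: "n \<le> N \<Longrightarrow> orbit_SN N (elem_sym n d :: 'a::comm_ring_1 mpoly) \<subseteq> poly_ring N"
proof
  fix g assume "n \<le> N" "g \<in> orbit_SN N (elem_sym n d :: 'a mpoly)"
  then have "g \<in> {E mvar d T | T. T \<subseteq> {1..N} \<and> card T = n}"
    by (simp only: orbit_elem)
  then obtain T where "T \<subseteq> {1..N}" "g = E mvar d T" by blast
  then show "g \<in> poly_ring N" using E_poly by blast
qed

lemma gen_rad:
  fixes B :: "nat set"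
  assumes d1: "1 \<le> d" and dn: "d \<le> n" and nN: "n + d \<le> N"
    and ch: "\<not> CHAR('a::field) dvd (n choose d)"
    and B: "B \<subseteq> {1..N}" "card B = d"
  shows "(\<Prod>i\<in>B. mvar i :: 'a mpoly) \<in> radical N (ideal_gen N (orbit_SN N (elem_sym n d :: 'a mpoly)))"
proof -
  let ?g = "(\<Prod>i\<in>B. mvar i :: 'a mpoly)"
  let ?I = "ideal_gen N (orbit_SN N (elem_sym n d :: 'a mpoly))"
  have nN': "n \<le> N" using nN by simp
  have gp: "?g \<in> poly_ring N" using B(1) by (rule prodvar_poly)
  have Isub: "?I \<subseteq> poly_ring N" by (rule ig_subset[OF orbit_elem_poly[OF nN']])
  show ?thesis
  proof (rule ccontr)
    assume "?g \<notin> radical N ?I"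
    then have nk: "\<forall>k. ?g ^ k \<notin> ?I" using gp by (auto simp: radical_def)
    define If where "If = {x. restr {1..N} x \<in> ?I}"
    have idf: "is_ideal If"
      unfolding is_ideal_def If_def
    proof (intro conjI ballI allI)
      show "0 \<in> {x. restr {1..N} x \<in> ?I}" by (simp add: restr_def meval_def)
    next
      fix a b assume "a \<in> {x. restr {1..N} x \<in> ?I}" "b \<in> {x. restr {1..N} x \<in> ?I}"
      then show "a + b \<in> {x. restr {1..N} x \<in> ?I}" by (simp add: restr_add ig_add)
    next
      fix a r assume "a \<in> {x. restr {1..N} x \<in> ?I}"
      then have "restr {1..N} r * restr {1..N} a \<in> ?I" using restr_in[of N r] by (intro ig_mult) auto
      then show "r * a \<in> {x. restr {1..N} x \<in> ?I}" by (simp only: mem_Collect_eq restr_mult)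
    qed
    have IIf: "?I \<subseteq> If"
    proof
      fix x assume x: "x \<in> ?I"
      then have "restr {1..N} x = x" using Isub by (intro restr_id) blast
      then show "x \<in> If" using x by (simp only: If_def mem_Collect_eq)
    qed
    have "\<forall>k. ?g ^ k \<notin> If"
    proof
      fix k
      have "restr {1..N} (?g ^ k) = ?g ^ k" using gp by (intro restr_id poly_ring_power)
      then show "?g ^ k \<notin> If" using nk by (simp add: If_def)
    qed
    then obtain P where P: "is_prime P" "If \<subseteq> P" "?g \<notin> P"
      using exists_prime[OF idf] by blast
    have IP: "is_ideal P" using P(1) by (simp add: is_prime_def)
    have C: "(of_nat (n choose d) :: 'a mpoly) \<notin> P"
    proof
      assume a: "(of_nat (n choose d) :: 'a mpoly) \<in> P"
      define c where "c = (of_nat (n choose d) :: 'a)"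
      have c0: "c \<noteq> 0" using ch by (simp add: c_def of_nat_eq_0_iff_char_dvd)
      have "(of_nat (n choose d) :: 'a mpoly) = mconst c"
        by (simp add: c_def mconst_def)
      then have "(of_nat (n choose d) :: 'a mpoly) * mconst (inverse c) = 1"
        using c0 by (simp add: mconst_mult[symmetric])
      moreover have "(of_nat (n choose d) :: 'a mpoly) * mconst (inverse c) \<in> P"
        using a by (rule ideal_multR[OF IP])
      ultimately show False using P(1) by (simp add: is_prime_def)
    qed
    have hyp: "\<forall>T. T \<subseteq> {1..N} \<longrightarrow> card T = n \<longrightarrow> E mvar d T \<in> P"
    proof (intro allI impI)
      fix T assume T: "T \<subseteq> {1..N}" "card T = n"
      then have "E mvar d T \<in> {E mvar d T | T. T \<subseteq> {1..N} \<and> card T = n}" by blast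
      then have "(E mvar d T :: 'a mpoly) \<in> orbit_SN N (elem_sym n d :: 'a mpoly)"
        by (simp only: orbit_elem[OF nN'])
      then have "(E mvar d T :: 'a mpoly) \<in> ?I" by (rule ig_gen)
      then show "(E mvar d T :: 'a mpoly) \<in> P" using IIf P(2) by blast
    qed
    obtain i where i: "i \<in> B" "mvar i \<in> P"
      using point_main[OF P(1) C d1 dn nN hyp B] by blast
    have fB: "finite B" using B(1) by (rule finite_subset) simp
    have "?g \<in> P" using prod_in_ideal[OF IP fB i(1), of mvar] i(2) by blast
    with P(3) show False by contradiction
  qed
qed

lemma part2:
  fixes \<alpha> :: "nat \<Rightarrow>\<^sub>0 nat"
  assumes nN: "n \<le> N" and ch: "CHAR('a::field) dvd (n choose d)"
  shows "mmonom \<alpha> \<notin> radical N (ideal_gen N (orbit_SN N (elem_sym n d :: 'a mpoly)))"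
proof
  assume "mmonom \<alpha> \<in> radical N (ideal_gen N (orbit_SN N (elem_sym n d :: 'a mpoly)))"
  then obtain k where k: "(mmonom \<alpha> :: 'a mpoly) ^ k \<in> ideal_gen N (orbit_SN N (elem_sym n d :: 'a mpoly))"
    by (auto simp: radical_def)
  define ev where "ev = meval (\<lambda>_. (1::'a)) id"
  interpret H: rhom id by (rule rhom_id)
  have ev0: "ev g = 0" if g: "g \<in> orbit_SN N (elem_sym n d :: 'a mpoly)" for g
  proof -
    have "g \<in> {E mvar d T | T. T \<subseteq> {1..N} \<and> card T = n}"
      using g by (simp only: orbit_elem[OF nN])
    then obtain T where T: "T \<subseteq> {1..N}" "card T = n" "g = E mvar d T" by blast
    have fT: "finite T" using T(1) by (rule finite_subset) simp
    have "ev g = (\<Sum>S\<in>{S. S \<subseteq> T \<and> card S = d}. (1::'a))"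
      by (simp add: ev_def T(3) E_def H.meval_sum H.meval_prod)
    also have "\<dots> = of_nat (n choose d)" using fT T(2) by (simp add: n_subsets)
    also have "\<dots> = 0" using ch by (simp add: of_nat_eq_0_iff_char_dvd)
    finally show ?thesis .
  qed
  have "ev x = 0" if x: "x \<in> ideal_gen N (orbit_SN N (elem_sym n d :: 'a mpoly))" for x
  proof -
    obtain F c where F: "x = (\<Sum>g\<in>F. c g * g)" "F \<subseteq> orbit_SN N (elem_sym n d :: 'a mpoly)"
      using x unfolding ideal_gen_def by blast
    have "ev x = (\<Sum>g\<in>F. ev (c g) * ev g)" by (simp add: F(1) ev_def H.meval_sum H.meval_mult)
    also have "\<dots> = 0" using F(2) ev0 by (intro sum.neutral) auto
    finally show ?thesis .
  qed
  then have "ev ((mmonom \<alpha> :: 'a mpoly) ^ k) = 0" using k by blast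
  moreover have "ev ((mmonom \<alpha> :: 'a mpoly) ^ k) = 1"
    by (simp add: ev_def H.meval_power mmonom_def mon_def)
  ultimately show False by simp
qed

theorem proposition2p1:
  fixes n d N :: nat
  assumes "1 \<le> d" and "d \<le> n"
  shows "(n + d \<le> N \<and> \<not> CHAR('a::field) dvd (n choose d) \<longrightarrow>
           radical N (ideal_gen N (orbit_SN N (elem_sym n d :: 'a mpoly)))
             = ideal_gen N (orbit_SN N (\<Prod>i \<in> {1..d}. mvar i)))
       \<and> (n \<le> N \<and> CHAR('a) dvd (n choose d) \<longrightarrow>
           (\<forall>\<alpha>. Poly_Mapping.keys \<alpha> \<subseteq> {1..N} \<longrightarrow>
              mmonom \<alpha> \<notin> radical N (ideal_gen N (orbit_SN N (elem_sym n d :: 'a mpoly)))))"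
proof (intro conjI impI allI)
  fix \<alpha> :: "nat \<Rightarrow>\<^sub>0 nat"
  assume "n \<le> N \<and> CHAR('a) dvd (n choose d)"
  then show "mmonom \<alpha> \<notin> radical N (ideal_gen N (orbit_SN N (elem_sym n d :: 'a mpoly)))"
    using part2 by blast
next
  assume h: "n + d \<le> N \<and> \<not> CHAR('a) dvd (n choose d)"
  then have nN: "n + d \<le> N" and ch: "\<not> CHAR('a) dvd (n choose d)" by auto
  have dN: "d \<le> N" and nN': "n \<le> N" using nN by auto
  let ?I = "ideal_gen N (orbit_SN N (elem_sym n d :: 'a mpoly))"
  let ?J = "ideal_gen N (orbit_SN N (\<Prod>i \<in> {1..d}. mvar i :: 'a mpoly))"
  have prodJ: "(\<Prod>i\<in>S. mvar i :: 'a mpoly) \<in> ?J" if "S \<subseteq> {1..N}" "card S = d" for S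
  proof -
    have "(\<Prod>i\<in>S. mvar i :: 'a mpoly) \<in> {\<Prod>i\<in>B. mvar i | B. B \<subseteq> {1..N} \<and> card B = d}"
      using that by blast
    then have "(\<Prod>i\<in>S. mvar i :: 'a mpoly) \<in> orbit_SN N (\<Prod>i \<in> {1..d}. mvar i :: 'a mpoly)"
      by (simp only: orbit_prodvar[OF dN])
    then show ?thesis by (rule ig_gen)
  qed
  have IJ: "?I \<subseteq> ?J"
  proof (rule ig_sub, rule subsetI)
    fix g assume "g \<in> orbit_SN N (elem_sym n d :: 'a mpoly)"
    then have "g \<in> {E mvar d T | T. T \<subseteq> {1..N} \<and> card T = n}"
      by (simp only: orbit_elem[OF nN'])
    then obtain T where T: "T \<subseteq> {1..N}" "g = E mvar d T" by blast
    show "g \<in> ?J" unfolding T(2) E_def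
      using T(1) by (intro ig_sum prodJ) auto
  qed
  show "radical N ?I = ?J"
  proof
    show "radical N ?I \<subseteq> ?J"
    proof
      fix f assume "f \<in> radical N ?I"
      then obtain k where "f \<in> poly_ring N" "f ^ k \<in> ?I" by (auto simp: radical_def)
      then show "f \<in> ?J" using IJ J_rad[OF dN] by blast
    qed
  next
    show "?J \<subseteq> radical N ?I"
    proof
      fix x assume "x \<in> ?J"
      then obtain F c where F: "x = (\<Sum>g\<in>F. c g * g)" "F \<subseteq> orbit_SN N (\<Prod>i \<in> {1..d}. mvar i :: 'a mpoly)"
        "\<forall>g\<in>F. c g \<in> poly_ring N"
        unfolding ideal_gen_def by blast
      have "c g * g \<in> radical N ?I" if g: "g \<in> F" for g
      proof -
        have "g \<in> {\<Prod>i\<in>B. mvar i | B. B \<subseteq> {1..N} \<and> card B = d}"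
          using F(2) g by (simp only: orbit_prodvar[OF dN] subset_iff)
        then obtain B where "B \<subseteq> {1..N}" "card B = d" "g = (\<Prod>i\<in>B. mvar i)" by blast
        then have "g \<in> radical N ?I" using gen_rad[OF assms nN ch] by blast
        then show ?thesis using F(3) g by (intro rad_mult) auto
      qed
      then show "x \<in> radical N ?I" unfolding F(1) by (intro rad_sum)
    qed
  qed
qed


end
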